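(* For every integer $j\ge0$ and every $t\ge0$, $$e^{-t}\frac{t^j}{j!}=\sum_{k=j}^\infty \sigma_2(k,j)\,j!\,(-1)^{k-j}\,p_k(t),$$ the series being convergent.
   Context: $\sigma_2(k,j)$ are the Stirling numbers of the second kind; $\sigma_1(k,j)$ are the unsigned Stirling numbers of the first kind ($\sigma_1(k,j)=0$ for $k<j$, $\sigma_1(0,0)=1$); $p_k(t)=e^{-t}\sum_{m=k}^\infty \frac{t^m}{m!}\frac{\sigma_1(m,k)}{m!}$. *)

theory Defs
  imports "HOL-Analysis.Analysis" "HOL-Combinatorics.Stirling"
begin

definition p_fun :: "nat \<Rightarrow> real \<Rightarrow> real" where
  "p_fun k t = exp (- t) *
     (\<Sum>i. t ^ (i + k) / fact (i + k) * real (stirling (i + k) k) / fact (i + k))"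

end

theory Submission
  imports Defs
begin

lemma Stirling_le: "Stirling n k \<le> (Suc k) ^ n"
proof (induction n k rule: Stirling.induct)
  case (4 n k)
  have "Stirling (Suc n) (Suc k) = Suc k * Stirling n (Suc k) + Stirling n k" by simp
  also have "\<dots> \<le> Suc k * (Suc (Suc k))^n + (Suc k)^n"
    using 4 by (intro add_mono mult_le_mono2) auto
  also have "(Suc k)^n \<le> (Suc (Suc k))^n" by (intro power_mono) auto
  hence "Suc k * (Suc (Suc k))^n + (Suc k)^n \<le> Suc (Suc k) ^ Suc n" by simp
  finally show ?case .
qed auto

definition TT :: "nat \<Rightarrow> nat \<Rightarrow> real" where
  "TT m j = (\<Sum>k\<le>m. (-1)^k * real (stirling m k) * real (Stirling k j))"

lemma TT_eq: "TT m j = (if m = j then (-1)^j else 0)"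
proof (induction m arbitrary: j)
  case 0
  then show ?case by (cases j) (auto simp: TT_def)
next
  case (Suc m)
  have e1: "TT (Suc m) j = (\<Sum>k\<le>m. (-1)^(Suc k) * real (stirling (Suc m) (Suc k)) * real (Stirling (Suc k) j))"
    unfolding TT_def by (subst sum.atMost_Suc_shift) simp
  also have "\<dots> = (\<Sum>k\<le>m. real m * ((-1)^(Suc k) * real (stirling m (Suc k)) * real (Stirling (Suc k) j)))
       + (\<Sum>k\<le>m. (-1)^(Suc k) * real (stirling m k) * real (Stirling (Suc k) j))"
    by (simp add: sum.distrib[symmetric] algebra_simps)
  also have "(\<Sum>k\<le>m. real m * ((-1)^(Suc k) * real (stirling m (Suc k)) * real (Stirling (Suc k) j)))
      = real m * TT m j"
  proof -
    have "TT m j = (\<Sum>k\<le>Suc m. (-1)^k * real (stirling m k) * real (Stirling k j))"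
      unfolding TT_def by simp
    also have "\<dots> = real (stirling m 0) * real (Stirling 0 j) + (\<Sum>k\<le>m. (-1)^(Suc k) * real (stirling m (Suc k)) * real (Stirling (Suc k) j))"
      by (subst sum.atMost_Suc_shift) simp
    finally have "(\<Sum>k\<le>m. (-1)^(Suc k) * real (stirling m (Suc k)) * real (Stirling (Suc k) j))
         = TT m j - real (stirling m 0) * real (Stirling 0 j)" by linarith
    moreover have "real m * (real (stirling m 0) * real (Stirling 0 j)) = 0" by (cases m) auto
    ultimately show ?thesis by (simp only: sum_distrib_left[symmetric] right_diff_distrib)
  qed
  also have "(\<Sum>k\<le>m. (-1)^(Suc k) * real (stirling m k) * real (Stirling (Suc k) j))
     = (case j of 0 \<Rightarrow> 0 | Suc j' \<Rightarrow> - real j * TT m j - TT m j')"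
  proof (cases j)
    case 0 then show ?thesis by simp
  next
    case (Suc j')
    then show ?thesis unfolding TT_def
      by (simp add: sum_distrib_left sum_negf[symmetric] sum.distrib[symmetric] algebra_simps)
  qed
  finally show ?case using Suc.IH by (cases j) (auto simp: algebra_simps split: if_splits)
qed


definition qq :: "real \<Rightarrow> nat \<Rightarrow> nat \<Rightarrow> real" where
  "qq t k l = t ^ (l + k) / fact (l + k) * real (stirling (l + k) k) / fact (l + k)"

lemma stirling_le_fact: "stirling m k \<le> fact m"
proof (cases "k \<le> m")
  case True
  have "stirling m k \<le> (\<Sum>k\<le>m. stirling m k)"
    using True by (intro member_le_sum) auto
  then show ?thesis by (simp add: sum_stirling)
qed simp

lemma summable_exp_shift: "summable (\<lambda>l. (x::real) ^ (l + k) / fact (l + k))"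
proof -
  have "summable (\<lambda>n. x ^ n / fact n)"
    using exp_converges[of x] by (simp add: sums_iff divide_inverse mult.commute scaleR_conv_of_real)
  then show ?thesis by (rule summable_ignore_initial_segment)
qed

lemma qq_nonneg: "t \<ge> 0 \<Longrightarrow> qq t k l \<ge> 0"
  unfolding qq_def by simp

lemma qq_has_sum:
  assumes "t \<ge> 0"
  shows "(qq t k has_sum suminf (qq t k)) UNIV"
proof -
  have "summable (qq t k)"
  proof (rule summable_comparison_test[OF _ summable_exp_shift[of t k]])
    show "\<exists>N. \<forall>n\<ge>N. norm (qq t k n) \<le> t ^ (n + k) / fact (n + k)"
    proof (intro exI allI impI)
      fix n
      have "real (stirling (n + k) k) \<le> real (fact (n + k))"
        using stirling_le_fact[of "n+k" k] by (simp only: of_nat_le_iff)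
      hence "real (stirling (n + k) k) / fact (n + k) \<le> 1"
        by (simp add: divide_le_eq_1)
      hence "t ^ (n + k) / fact (n + k) * (real (stirling (n + k) k) / fact (n + k))
          \<le> t ^ (n + k) / fact (n + k) * 1"
        using assms by (intro mult_left_mono) auto
      moreover have "norm (qq t k n) = qq t k n" using qq_nonneg[OF assms, of k n] by simp
      moreover have "qq t k n = t ^ (n + k) / fact (n + k) * (real (stirling (n + k) k) / fact (n + k))"
        unfolding qq_def by simp
      ultimately show "norm (qq t k n) \<le> t ^ (n + k) / fact (n + k)" by simp
    qed
  qed
  then show ?thesis
    using sums_nonneg_imp_has_sum[OF summable_sums] qq_nonneg[OF assms] by blast
qed

lemma row_identity:
  "(\<Sum>i\<le>n. (-1)^i * real (Stirling (i+j) j) * real (stirling (n+j) (i+j))) = (if n = 0 then 1 else 0)"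
proof -
  let ?f = "\<lambda>k. (-1)^k * real (stirling (n+j) k) * real (Stirling k j)"
  have "TT (n+j) j = (\<Sum>k\<le>n+j. ?f k)" by (simp add: TT_def)
  also have "{..n+j} = {..<j} \<union> {j..n+j}" by auto
  also have "sum ?f \<dots> = sum ?f {..<j} + sum ?f {j..n+j}"
    by (intro sum.union_disjoint) auto
  also have "sum ?f {..<j} = 0" by (intro sum.neutral) auto
  also have "sum ?f {j..n+j} = sum ?f {0+j..n+j}" by simp
  also have "\<dots> = (\<Sum>i=0..n. ?f (i+j))" by (rule sum.shift_bounds_cl_nat_ivl)
  also have "\<dots> = (-1)^j * (\<Sum>i\<le>n. (-1)^i * real (Stirling (i+j) j) * real (stirling (n+j) (i+j)))"
    by (simp add: atLeast0AtMost sum_distrib_left power_add algebra_simps)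
  finally show ?thesis using TT_eq[of "n+j" j]
    by (auto split: if_splits simp: power_add)
qed

lemma Stirling_le_sum:
  "(\<Sum>i\<le>n. Stirling (i+j) j * stirling (n+j) (i+j)) \<le> (Suc j)^(n+j) * fact (n+j)"
proof -
  have "(\<Sum>i\<le>n. Stirling (i+j) j * stirling (n+j) (i+j)) \<le> (\<Sum>i\<le>n. (Suc j)^(n+j) * stirling (n+j) (i+j))"
  proof (intro sum_mono mult_le_mono1)
    fix i assume "i \<in> {..n}"
    then have "Stirling (i+j) j \<le> (Suc j)^(i+j)" "(Suc j)^(i+j) \<le> (Suc j)^(n+j)"
      using Stirling_le by (auto intro: power_increasing)
    then show "Stirling (i+j) j \<le> (Suc j)^(n+j)" by linarith
  qed
  also have "\<dots> = (Suc j)^(n+j) * (\<Sum>i\<le>n. stirling (n+j) (i+j))" by (simp add: sum_distrib_left)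
  also have "(\<Sum>i\<le>n. stirling (n+j) (i+j)) = (\<Sum>k\<in>(\<lambda>i. i+j)`{..n}. stirling (n+j) k)"
    by (simp add: sum.reindex inj_on_def)
  also have "\<dots> \<le> (\<Sum>k\<le>n+j. stirling (n+j) k)" by (intro sum_mono2) auto
  also have "\<dots> = fact (n+j)" by (rule sum_stirling)
  finally show ?thesis by simp
qed


theorem lemma2:
  fixes j :: nat and t :: real
  assumes "t \<ge> 0"
  shows "(\<lambda>i. real (Stirling (i + j) j) * fact j * (-1) ^ i * p_fun (i + j) t)
           sums (exp (- t) * t ^ j / fact j)"
proof -
  define F where "F = (\<lambda>(i::nat, l::nat). (-1)^i * real (Stirling (i+j) j) * qq t (i+j) l)"
  define G where "G = (\<lambda>(n::nat, i::nat). F (i, n - i))"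
  define H where "H = (\<lambda>(n::nat, i::nat). real (Stirling (i+j) j) * real (stirling (n+j) (i+j)) * (t^(n+j) / fact (n+j) / fact (n+j)))"
  have GH: "norm (G (n,i)) = H (n,i)" if "i \<le> n" for n i
  proof -
    have e: "n - i + (i + j) = n + j" using that by simp
    have "G (n,i) = (-1)^i * H (n,i)"
      unfolding G_def F_def H_def qq_def by (simp add: e)
    then show ?thesis using assms by (simp add: H_def abs_mult)
  qed
  define R where "R = (\<lambda>n. \<Sum>i\<le>n. H (n,i))"
  define B where "B = (\<lambda>n. ((Suc j) * t)^(n+j) / fact (n+j))"
  have B_sum: "B summable_on UNIV"
    unfolding B_def using assms
    by (intro summable_nonneg_imp_summable_on_strong summable_exp_shift) auto
  have RB: "R n \<le> B n" for n
  proof -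
    have "R n = real (\<Sum>i\<le>n. Stirling (i+j) j * stirling (n+j) (i+j)) * (t^(n+j) / fact (n+j) / fact (n+j))"
      unfolding R_def H_def of_nat_sum of_nat_mult sum_distrib_right by simp
    also have "\<dots> \<le> real ((Suc j)^(n+j) * fact (n+j)) * (t^(n+j) / fact (n+j) / fact (n+j))"
      using assms by (intro mult_right_mono) (simp_all only: of_nat_le_iff Stirling_le_sum, simp)
    also have "\<dots> = B n"
      unfolding B_def by (simp add: power_mult_distrib)
    finally show ?thesis .
  qed
  have H_nonneg: "H (n,i) \<ge> 0" for n i using assms by (simp add: H_def)
  have R_sum: "R summable_on UNIV"
    by (rule summable_on_comparison_test[OF B_sum]) (use RB H_nonneg in \<open>auto simp: R_def intro: sum_nonneg\<close>)
  have H_summ: "H summable_on Sigma UNIV atMost"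
    by (rule summable_on_SigmaI[where g = R, OF _ R_sum]) (auto simp: R_def H_nonneg)
  have G_summ: "G summable_on Sigma UNIV atMost"
  proof -
    have "(\<lambda>x. norm (G x)) summable_on Sigma UNIV atMost"
      using H_summ by (rule summable_on_cong[THEN iffD1, rotated]) (auto simp: GH[symmetric])
    then show ?thesis using summable_on_iff_abs_summable_on_real by blast
  qed
  have F_summ: "F summable_on UNIV \<times> UNIV"
  proof -
    have "G summable_on Sigma UNIV atMost \<longleftrightarrow> F summable_on UNIV \<times> UNIV"
      by (rule summable_on_reindex_bij_witness[where j = "\<lambda>(n,i). (i, n - i)" and i = "\<lambda>(i,l). (l+i, i)"])
         (auto simp: G_def)
    then show ?thesis using G_summ by simp
  qed
  define V where "V = infsum F (UNIV \<times> UNIV)"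
  have F_has: "(F has_sum V) (UNIV \<times> UNIV)" unfolding V_def using F_summ by (rule has_sum_infsum)
  have G_has: "(G has_sum V) (Sigma UNIV atMost)"
  proof -
    have "(G has_sum V) (Sigma UNIV atMost) \<longleftrightarrow> (F has_sum V) (UNIV \<times> UNIV)"
      by (rule has_sum_reindex_bij_witness[where j = "\<lambda>(n,i). (i, n - i)" and i = "\<lambda>(i,l). (l+i, i)"])
         (auto simp: G_def)
    then show ?thesis using F_has by simp
  qed
  define W where "W = t^j / fact j / fact j"
  have Grow: "(\<Sum>i\<le>n. G (n,i)) = (if n = 0 then W else 0)" for n
  proof -
    have "(\<Sum>i\<le>n. G (n,i)) = (\<Sum>i\<le>n. (-1)^i * real (Stirling (i+j) j) * real (stirling (n+j) (i+j))) * (t^(n+j) / fact (n+j) / fact (n+j))"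
      unfolding sum_distrib_right
    proof (intro sum.cong refl)
      fix i assume "i \<in> {..n}"
      then have e: "n - i + (i + j) = n + j" by simp
      show "G (n,i) = (-1)^i * real (Stirling (i+j) j) * real (stirling (n+j) (i+j)) * (t^(n+j) / fact (n+j) / fact (n+j))"
        unfolding G_def F_def qq_def by (simp add: e)
    qed
    then show ?thesis by (simp add: row_identity W_def)
  qed
  have "((\<lambda>n::nat. if n = 0 then W else 0) has_sum V) UNIV"
  proof -
    have rows: "\<And>n. n \<in> UNIV \<Longrightarrow> ((\<lambda>i. G (n,i)) has_sum (\<lambda>n. if n = 0 then W else 0) n) {..n}"
      using Grow by (intro has_sum_finiteI) auto
    show ?thesis using has_sum_SigmaD[OF G_has rows] by simp
  qed
  moreover have "((\<lambda>n::nat. if n = 0 then W else 0) has_sum W) UNIV"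
    by (rule has_sum_finite_neutralI[where B = "{0}"]) auto
  ultimately have VW: "V = W" using has_sum_unique by blast
  define r where "r = (\<lambda>i. (-1)^i * real (Stirling (i+j) j) * suminf (qq t (i+j)))"
  have "(r has_sum W) UNIV"
  proof (rule has_sum_SigmaD[OF F_has[unfolded VW]])
    fix i :: nat
    show "((\<lambda>l. F (i, l)) has_sum r i) UNIV"
      unfolding F_def r_def using has_sum_cmult_right[OF qq_has_sum[OF assms, of "i+j"]] by simp
  qed
  then have "((\<lambda>i. exp (-t) * fact j * r i) has_sum (exp (-t) * fact j * W)) UNIV"
    by (rule has_sum_cmult_right)
  then have "(\<lambda>i. exp (-t) * fact j * r i) sums (exp (-t) * fact j * W)"
    by (rule has_sum_imp_sums)
  moreover have "(\<lambda>i. exp (-t) * fact j * r i) = (\<lambda>i. real (Stirling (i + j) j) * fact j * (-1) ^ i * p_fun (i + j) t)"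
    by (rule ext) (simp add: r_def p_fun_def qq_def[abs_def])
  moreover have "exp (-t) * fact j * W = exp (- t) * t ^ j / fact j"
    by (simp add: W_def)
  ultimately show ?thesis by simp
qed

end
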